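(* Let $\epsilon>0$ and $\beta\ge 2+\epsilon$ be constants, let $n$ be even, and let $G=G(n,p)$ be the Erdős–Rényi random graph on $V=\{1,\dots,n\}$ with $p=\beta\log n/n$. Fix, independently of the random graph, any two disjoint sets $N_1,N_2\subseteq V$ with $|N_1|=|N_2|=n/2$. Then, with probability tending to $1$ as $n\to\infty$: (i) $N_1,N_2$ form a $2$-partition of $G$; (ii) $M^G_{k,n}\le 2M^C_{k,n/2}+2$ for every $k\ge1$, which is $O(2k\log(n/(2k)))+2$.
   Context: $G(n,p)$ includes each of the $\binom n2$ possible edges independently with probability $p$. A set $S\subseteq V$ is a hub for $U\subseteq V$ if the induced subgraph $G_S$ is connected and every $u\in U$ has a neighbor in $S$. Pairwise disjoint sets $N_1,\dots,N_r$ form an $r$-partition of $G$ if $\bigcup_i N_i=V$ and, for every $i$, $V\setminus N_i$ is a hub for $N_i$. A measurement matrix for $G$ is a $0$-$1$ matrix with columns indexed by $V$ in which every nonzero row has a support that induces a connected subgraph of $G$. A vector is $k$-sparse if it has at most $k$ nonzero entries. $A$ identifies all $k$-sparse vectors if $Ax_1\ne Ax_2$ for every two distinct $k$-sparse $x_1,x_2\in\mathbb{R}^n$. $M^G_{k,n}$ is the minimum number of rows of a measurement matrix for $G$ that identifies all $k$-sparse vectors. $M^C_{k,N}$ is the minimum number of rows of an arbitrary $0$-$1$ matrix with $N$ columns that identifies all $k$-sparse vectors in $\mathbb{R}^N$. *)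

theory Defs
  imports "HOL-Probability.Probability"
begin

text \<open>Vertex set V = {1..n}. The random graph G(n,p): each unordered pair {i,j}
 (encoded as (i,j) with i < j) is an edge independently with probability p.\<close>

definition vpairs :: "nat \<Rightarrow> (nat \<times> nat) set" where
  "vpairs n = {(i,j). 1 \<le> i \<and> i < j \<and> j \<le> n}"

definition Gnp :: "nat \<Rightarrow> real \<Rightarrow> (nat \<times> nat \<Rightarrow> bool) pmf" where
  "Gnp n p = Pi_pmf (vpairs n) False (\<lambda>_. bernoulli_pmf p)"

definition adj :: "(nat \<times> nat \<Rightarrow> bool) \<Rightarrow> nat \<Rightarrow> nat \<Rightarrow> bool" where
  "adj f u v = (u \<noteq> v \<and> f (min u v, max u v))"

definition connected_in :: "(nat \<Rightarrow> nat \<Rightarrow> bool) \<Rightarrow> nat set \<Rightarrow> bool" where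
  "connected_in E S = (S \<noteq> {} \<and>
     (\<forall>u\<in>S. \<forall>v\<in>S. (u, v) \<in> {(a, b). a \<in> S \<and> b \<in> S \<and> E a b}\<^sup>*))"

definition is_hub :: "(nat \<Rightarrow> nat \<Rightarrow> bool) \<Rightarrow> nat set \<Rightarrow> nat set \<Rightarrow> bool" where
  "is_hub E S U = (connected_in E S \<and> (\<forall>u\<in>U. \<exists>s\<in>S. E u s))"

definition r_partition :: "nat set \<Rightarrow> (nat \<Rightarrow> nat \<Rightarrow> bool) \<Rightarrow> nat \<Rightarrow> (nat \<Rightarrow> nat set) \<Rightarrow> bool" where
  "r_partition V E r N =
     ((\<forall>i\<in>{1..r}. \<forall>j\<in>{1..r}. i \<noteq> j \<longrightarrow> N i \<inter> N j = {}) \<and>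
      (\<Union>i\<in>{1..r}. N i) = V \<and>
      (\<forall>i\<in>{1..r}. is_hub E (V - N i) (N i)))"

text \<open>A 0-1 matrix with columns indexed by V is represented by the list of its row supports;
 (A x)_r = sum of x over the r-th row support. Vectors in R^V are functions vanishing off V.\<close>

definition sparse_vec :: "nat set \<Rightarrow> nat \<Rightarrow> (nat \<Rightarrow> real) \<Rightarrow> bool" where
  "sparse_vec V k x = ((\<forall>i. i \<notin> V \<longrightarrow> x i = 0) \<and> card {i. x i \<noteq> 0} \<le> k)"

definition mat_apply :: "nat set list \<Rightarrow> (nat \<Rightarrow> real) \<Rightarrow> real list" where
  "mat_apply A x = map (\<lambda>S. \<Sum>i\<in>S. x i) A"

definition identifies :: "nat set \<Rightarrow> nat \<Rightarrow> nat set list \<Rightarrow> bool" where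
  "identifies V k A = (\<forall>x1 x2. sparse_vec V k x1 \<longrightarrow> sparse_vec V k x2 \<longrightarrow> x1 \<noteq> x2
       \<longrightarrow> mat_apply A x1 \<noteq> mat_apply A x2)"

definition zero_one_matrix :: "nat set \<Rightarrow> nat set list \<Rightarrow> bool" where
  "zero_one_matrix V A = (\<forall>S\<in>set A. S \<subseteq> V)"

definition measurement_matrix :: "nat set \<Rightarrow> (nat \<Rightarrow> nat \<Rightarrow> bool) \<Rightarrow> nat set list \<Rightarrow> bool" where
  "measurement_matrix V E A = (zero_one_matrix V A \<and> (\<forall>S\<in>set A. S \<noteq> {} \<longrightarrow> connected_in E S))"

definition MG :: "nat set \<Rightarrow> (nat \<Rightarrow> nat \<Rightarrow> bool) \<Rightarrow> nat \<Rightarrow> nat" where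
  "MG V E k = (LEAST m. \<exists>A. length A = m \<and> measurement_matrix V E A \<and> identifies V k A)"

definition MC :: "nat \<Rightarrow> nat \<Rightarrow> nat" where
  "MC k N = (LEAST m. \<exists>A. length A = m \<and> zero_one_matrix {1..N} A \<and> identifies {1..N} k A)"

end

theory Submission
  imports Defs "HOL-Real_Asymp.Real_Asymp"
begin


lemma finite_vpairs: "finite (vpairs n)"
proof -
  have "vpairs n \<subseteq> {1..n} \<times> {1..n}" by (auto simp: vpairs_def)
  thus ?thesis by (rule finite_subset) auto
qed

lemma prob_noedges:
  assumes P: "P \<subseteq> vpairs n" and p: "0 \<le> p" "p \<le> 1"
  shows "measure_pmf.prob (Gnp n p) {f. \<forall>e\<in>P. \<not> f e} = (1-p)^card P"
proof -
  define B where "B = (\<lambda>e. if e \<in> P then {False} else (UNIV::bool set))"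
  have "measure_pmf.prob (Gnp n p) {f. \<forall>e\<in>P. \<not> f e}
      = measure_pmf.prob (Gnp n p) (Pi (vpairs n) B)"
    using P by (intro arg_cong[where f="measure_pmf.prob _"]) (auto simp: B_def Pi_def)
  also have "\<dots> = (\<Prod>e\<in>vpairs n. measure_pmf.prob (bernoulli_pmf p) (B e))"
    unfolding Gnp_def by (rule measure_Pi_pmf_Pi) (rule finite_vpairs)
  also have "\<dots> = (\<Prod>e\<in>vpairs n. if e \<in> P then 1 - p else 1)"
    using p by (intro prod.cong refl) (auto simp: B_def measure_pmf_single)
  also have "\<dots> = (1-p)^card (vpairs n \<inter> P)"
    by (subst prod.If_cases) (auto simp: finite_vpairs)
  also have "vpairs n \<inter> P = P" using P by auto
  finally show ?thesis .
qed

lemma prob_cut: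
  assumes A: "A \<subseteq> {1..n}" and B: "B \<subseteq> {1..n}" and AB: "A \<inter> B = {}"
    and p: "0 \<le> p" "p \<le> 1"
  shows "measure_pmf.prob (Gnp n p) {f. \<forall>a\<in>A. \<forall>b\<in>B. \<not> adj f a b} = (1-p)^(card A * card B)"
proof -
  define g where "g = (\<lambda>(a::nat,b::nat). (min a b, max a b))"
  define P where "P = g ` (A \<times> B)"
  have inj: "inj_on g (A \<times> B)"
    using AB unfolding inj_on_def g_def by (auto simp: min_def max_def split: if_splits)
  have fin: "finite A" "finite B" using A B finite_subset by blast+
  have cardP: "card P = card A * card B"
    unfolding P_def using card_image[OF inj] by (simp add: card_cartesian_product)
  have Psub: "P \<subseteq> vpairs n"
  proof
    fix e assume "e \<in> P"
    then obtain a b where ab: "a \<in> A" "b \<in> B" "e = (min a b, max a b)" unfolding P_def g_def by auto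
    have "a \<noteq> b" using ab AB by auto
    moreover have "a \<in> {1..n}" "b \<in> {1..n}" using ab A B by auto
    ultimately show "e \<in> vpairs n" using ab unfolding vpairs_def by (auto simp: min_def max_def)
  qed
  have "{f. \<forall>a\<in>A. \<forall>b\<in>B. \<not> adj f a b} = {f. \<forall>e\<in>P. \<not> f e}"
    using AB unfolding P_def g_def adj_def by fastforce
  thus ?thesis using prob_noedges[OF Psub p] cardP by simp
qed



lemma not_connected_cut:
  assumes S: "S \<noteq> {}" "finite S" and nc: "\<not> connected_in E S" and sym: "\<And>a b. E a b = E b a"
  shows "\<exists>T. T \<subseteq> S \<and> T \<noteq> {} \<and> 2 * card T \<le> card S \<and> (\<forall>a\<in>T. \<forall>b\<in>S-T. \<not> E a b)"
proof -
  define R where "R = {(a, b). a \<in> S \<and> b \<in> S \<and> E a b}"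
  obtain u v where uv: "u \<in> S" "v \<in> S" "(u,v) \<notin> R\<^sup>*"
    using nc S unfolding connected_in_def R_def by auto
  define C where "C = {w\<in>S. (u,w)\<in>R\<^sup>*}"
  have uC: "u \<in> C" and vC: "v \<notin> C" and CS: "C \<subseteq> S" using uv by (auto simp: C_def)
  have noE: "\<not> E a b" if "a \<in> C" "b \<in> S - C" for a b
  proof
    assume "E a b"
    hence "(a,b) \<in> R" using that CS by (auto simp: R_def)
    hence "(u,b) \<in> R\<^sup>*" using that by (auto simp: C_def intro: rtrancl_into_rtrancl)
    thus False using that by (auto simp: C_def)
  qed
  have finC: "finite C" using CS S finite_subset by blast
  have cd: "card (S - C) = card S - card C" using CS finC by (simp add: card_Diff_subset)
  have cle: "card C \<le> card S" using CS S card_mono by blast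
  show ?thesis
  proof (cases "2 * card C \<le> card S")
    case True thus ?thesis using uC CS noE by (intro exI[of _ C]) auto
  next
    case False
    have "S - C \<noteq> {}" using uv vC by auto
    moreover have "\<forall>a\<in>S-C. \<forall>b\<in>S-(S-C). \<not> E a b" using noE CS sym by (metis DiffD1 DiffD2 DiffI double_diff order_refl)
    ultimately show ?thesis using False cd cle by (intro exI[of _ "S - C"]) auto
  qed
qed

lemma connected_union:
  assumes H: "connected_in E H" and T: "\<forall>t\<in>T. \<exists>s\<in>H. E t s" and sym: "\<And>a b. E a b = E b a"
  shows "connected_in E (T \<union> H)"
proof -
  define R where "R = {(a, b). a \<in> T \<union> H \<and> b \<in> T \<union> H \<and> E a b}"
  have HH: "(a,b) \<in> R\<^sup>*" if "a \<in> H" "b \<in> H" for a b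
  proof -
    have "(a,b) \<in> {(a, b). a \<in> H \<and> b \<in> H \<and> E a b}\<^sup>*" using H that by (auto simp: connected_in_def)
    moreover have "{(a, b). a \<in> H \<and> b \<in> H \<and> E a b} \<subseteq> R" by (auto simp: R_def)
    ultimately show ?thesis using rtrancl_mono by blast
  qed
  have toH: "\<exists>h\<in>H. (a,h) \<in> R\<^sup>* \<and> (h,a) \<in> R\<^sup>*" if aTH: "a \<in> T \<union> H" for a
  proof (cases "a \<in> H")
    case True thus ?thesis by blast
  next
    case False
    then obtain s where "s \<in> H" "E a s" using T aTH False by auto
    hence "(a,s) \<in> R" "(s,a) \<in> R" using aTH sym \<open>s \<in> H\<close> by (auto simp: R_def)
    thus ?thesis using \<open>s \<in> H\<close> by blast
  qed
  have "H \<noteq> {}" using H by (auto simp: connected_in_def)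
  moreover have "(u,v) \<in> R\<^sup>*" if uv: "u \<in> T \<union> H" "v \<in> T \<union> H" for u v
  proof -
    obtain h1 where "h1 \<in> H" "(u,h1) \<in> R\<^sup>*" using toH[OF uv(1)] by blast
    moreover obtain h2 where "h2 \<in> H" "(h2,v) \<in> R\<^sup>*" using toH[OF uv(2)] by blast
    ultimately show ?thesis using HH by (meson rtrancl_trans)
  qed
  ultimately show ?thesis unfolding connected_in_def R_def by auto
qed



lemma MC_ex: "\<exists>A. length A = MC k N \<and> zero_one_matrix {1..N} A \<and> identifies {1..N} k A"
proof -
  define A where "A = map (\<lambda>i. {i}) [1..<N+1]"
  have "zero_one_matrix {1..N} A" by (auto simp: A_def zero_one_matrix_def)
  moreover have "identifies {1..N} k A"
    unfolding identifies_def
  proof (intro allI impI)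
    fix x1 x2 :: "nat \<Rightarrow> real"
    assume s1: "sparse_vec {1..N} k x1" and s2: "sparse_vec {1..N} k x2" and ne: "x1 \<noteq> x2"
    show "mat_apply A x1 \<noteq> mat_apply A x2"
    proof
      assume "mat_apply A x1 = mat_apply A x2"
      hence "map x1 [1..<N+1] = map x2 [1..<N+1]" by (simp add: mat_apply_def A_def comp_def)
      hence "\<forall>i\<in>set [1..<N+1]. x1 i = x2 i" by (simp only: map_eq_conv)
      hence "\<forall>i\<in>{1..N}. x1 i = x2 i" by (simp only: set_upt) auto
      moreover have "\<forall>i. i \<notin> {1..N} \<longrightarrow> x1 i = x2 i" using s1 s2 by (simp add: sparse_vec_def)
      ultimately have "x1 = x2" by blast
      thus False using ne by simp
    qed
  qed
  ultimately have "\<exists>m A. length A = m \<and> zero_one_matrix {1..N} A \<and> identifies {1..N} k A" by blast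
  from LeastI_ex[OF this] show ?thesis unfolding MC_def .
qed

lemma half:
  assumes bij: "bij_betw h {1..m} N1" and disj: "N1 \<inter> N2 = {}" and fN2: "finite N2"
    and z: "zero_one_matrix {1..m} A0" and idf: "identifies {1..m} k A0"
    and s1: "sparse_vec V k x1" and s2: "sparse_vec V k x2" and fV: "finite V"
    and eq: "mat_apply (map (\<lambda>S. h`S \<union> N2) A0 @ [N2]) x1 = mat_apply (map (\<lambda>S. h`S \<union> N2) A0 @ [N2]) x2"
  shows "\<forall>i\<in>N1. x1 i = x2 i"
proof -
  have inj: "inj_on h S" if "S \<in> set A0" for S
    using bij z that unfolding bij_betw_def zero_one_matrix_def by (meson inj_on_subset)
  have hS: "h ` S \<subseteq> N1" if "S \<in> set A0" for S
    using bij z that unfolding bij_betw_def zero_one_matrix_def by blast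
  have finS: "finite S" if "S \<in> set A0" for S
    using z that unfolding zero_one_matrix_def by (meson finite_atLeastAtMost finite_subset)
  have e1: "map (\<lambda>S. sum x1 (h`S \<union> N2)) A0 = map (\<lambda>S. sum x2 (h`S \<union> N2)) A0"
    and e2: "sum x1 N2 = sum x2 N2" using eq by (simp_all add: mat_apply_def comp_def)
  have sumS: "sum (x1 \<circ> h) S = sum (x2 \<circ> h) S" if "S \<in> set A0" for S
  proof -
    have d: "h`S \<inter> N2 = {}" using hS[OF that] disj by blast
    have "sum x1 (h`S \<union> N2) = sum x2 (h`S \<union> N2)" using e1 that by (simp add: map_eq_conv)
    hence "sum x1 (h`S) = sum x2 (h`S)"
      using e2 d finS[OF that] fN2 by (simp add: sum.union_disjoint)
    thus ?thesis using sum.reindex[OF inj[OF that], of x1] sum.reindex[OF inj[OF that], of x2] by simp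
  qed
  define y1 where "y1 = (\<lambda>i. if i \<in> {1..m} then x1 (h i) else 0)"
  define y2 where "y2 = (\<lambda>i. if i \<in> {1..m} then x2 (h i) else 0)"
  have "mat_apply A0 y1 = mat_apply A0 y2"
    unfolding mat_apply_def
  proof (rule map_cong[OF refl])
    fix S assume S: "S \<in> set A0"
    have "S \<subseteq> {1..m}" using z S by (auto simp: zero_one_matrix_def)
    hence "sum y1 S = sum (x1 \<circ> h) S" "sum y2 S = sum (x2 \<circ> h) S"
      unfolding y1_def y2_def by (auto intro!: sum.cong)
    thus "sum y1 S = sum y2 S" using sumS[OF S] by simp
  qed
  moreover have sp: "sparse_vec {1..m} k (\<lambda>i. if i \<in> {1..m} then x (h i) else 0)"
    if sx: "sparse_vec V k x" for x :: "nat \<Rightarrow> real"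
  proof -
    have fx: "finite {i. x i \<noteq> 0}" using sx fV unfolding sparse_vec_def
      by (metis (mono_tags, lifting) finite_subset mem_Collect_eq subsetI)
    have "card {i. (if i \<in> {1..m} then x (h i) else 0) \<noteq> 0} \<le> card {i. x i \<noteq> 0}"
    proof (rule card_inj_on_le[OF _ _ fx])
      show "inj_on h {i. (if i \<in> {1..m} then x (h i) else 0) \<noteq> 0}"
        using bij unfolding bij_betw_def by (rule inj_on_subset[OF conjunct1]) (auto split: if_splits)
      show "h ` {i. (if i \<in> {1..m} then x (h i) else 0) \<noteq> 0} \<subseteq> {i. x i \<noteq> 0}"
        by (auto split: if_splits)
    qed
    thus ?thesis using sx unfolding sparse_vec_def by auto
  qed
  ultimately have "y1 = y2" using idf sp[OF s1] sp[OF s2] unfolding identifies_def y1_def y2_def by blast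
  show ?thesis
  proof
    fix i assume "i \<in> N1"
    then obtain j where j: "j \<in> {1..m}" "i = h j" using bij unfolding bij_betw_def by auto
    have "y1 j = y2 j" using \<open>y1 = y2\<close> by simp
    thus "x1 i = x2 i" using j by (simp add: y1_def y2_def)
  qed
qed



lemma MG_bound:
  assumes N1: "N1 \<subseteq> {1..2*m}" and N2: "N2 \<subseteq> {1..2*m}" and disj: "N1 \<inter> N2 = {}"
    and c1: "card N1 = m" and c2: "card N2 = m"
    and cn1: "connected_in E N1" and cn2: "connected_in E N2"
    and h1: "\<forall>u\<in>N1. \<exists>s\<in>N2. E u s" and h2: "\<forall>u\<in>N2. \<exists>s\<in>N1. E u s"
    and sym: "\<And>a b. E a b = E b a"
  shows "MG {1..2*m} E k \<le> 2 * MC k m + 2"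
proof -
  define V where "V = {1..2*m}"
  have fN1: "finite N1" and fN2: "finite N2" using N1 N2 finite_subset by blast+
  have VU: "V = N1 \<union> N2"
  proof -
    have "card (N1 \<union> N2) = card V" using card_Un_disjoint[OF fN1 fN2 disj] c1 c2 by (simp add: V_def)
    thus ?thesis using N1 N2 by (metis V_def card_subset_eq finite_atLeastAtMost le_sup_iff)
  qed
  obtain A0 where A0: "length A0 = MC k m" "zero_one_matrix {1..m} A0" "identifies {1..m} k A0"
    using MC_ex by blast
  obtain g1 where g1: "bij_betw g1 {1..m} N1" using finite_same_card_bij[of "{1..m}" N1] fN1 c1 by auto
  obtain g2 where g2: "bij_betw g2 {1..m} N2" using finite_same_card_bij[of "{1..m}" N2] fN2 c2 by auto
  define R1 where "R1 = map (\<lambda>S. g1`S \<union> N2) A0 @ [N2]"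
  define R2 where "R2 = map (\<lambda>S. g2`S \<union> N1) A0 @ [N1]"
  have img1: "g1`S \<subseteq> N1" if "S \<in> set A0" for S
    using g1 A0(2) that unfolding bij_betw_def zero_one_matrix_def by blast
  have img2: "g2`S \<subseteq> N2" if "S \<in> set A0" for S
    using g2 A0(2) that unfolding bij_betw_def zero_one_matrix_def by blast
  have mm: "measurement_matrix V E (R1 @ R2)"
    unfolding measurement_matrix_def zero_one_matrix_def
  proof (intro conjI ballI impI)
    fix S assume S: "S \<in> set (R1 @ R2)"
    thus "S \<subseteq> V" using img1 img2 VU by (auto simp: R1_def R2_def) blast+
    show "connected_in E S" using S
    proof (auto simp: R1_def R2_def cn1 cn2)
      fix T assume "T \<in> set A0"
      show "connected_in E (g1 ` T \<union> N2)"
        using connected_union[OF cn2 _ sym] img1[OF \<open>T \<in> set A0\<close>] h1 by blast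
      show "connected_in E (g2 ` T \<union> N1)"
        using connected_union[OF cn1 _ sym] img2[OF \<open>T \<in> set A0\<close>] h2 by blast
    qed
  qed
  have idf: "identifies V k (R1 @ R2)"
    unfolding identifies_def
  proof (intro allI impI)
    fix x1 x2 :: "nat \<Rightarrow> real"
    assume s1: "sparse_vec V k x1" and s2: "sparse_vec V k x2" and ne: "x1 \<noteq> x2"
    show "mat_apply (R1 @ R2) x1 \<noteq> mat_apply (R1 @ R2) x2"
    proof
      assume "mat_apply (R1 @ R2) x1 = mat_apply (R1 @ R2) x2"
      hence "mat_apply R1 x1 @ mat_apply R2 x1 = mat_apply R1 x2 @ mat_apply R2 x2"
        by (simp add: mat_apply_def)
      hence e1: "mat_apply R1 x1 = mat_apply R1 x2" and e2: "mat_apply R2 x1 = mat_apply R2 x2"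
        by (simp_all add: mat_apply_def)
      have fV: "finite V" by (simp add: V_def)
      have a1: "\<forall>i\<in>N1. x1 i = x2 i"
        using half[OF g1 disj fN2 A0(2) A0(3) s1 s2 fV] e1 by (simp add: R1_def)
      have a2: "\<forall>i\<in>N2. x1 i = x2 i"
        using half[OF g2 _ fN1 A0(2) A0(3) s1 s2 fV] disj e2 by (simp add: R2_def Int_commute)
      have "\<forall>i. i \<notin> V \<longrightarrow> x1 i = x2 i" using s1 s2 by (simp add: sparse_vec_def)
      hence "x1 = x2" using a1 a2 VU by blast
      thus False using ne by simp
    qed
  qed
  have len: "length (R1 @ R2) = 2 * MC k m + 2" using A0(1) by (simp add: R1_def R2_def)
  have "MG V E k \<le> length (R1 @ R2)"
    unfolding MG_def by (rule Least_le) (use mm idf in blast)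
  thus ?thesis using len by (simp add: V_def)
qed



lemma pow_exp_bound:
  fixes p :: real assumes "0 \<le> p" "p \<le> 1"
  shows "(1-p)^j \<le> exp (- p * j)"
proof -
  have "1 - p \<le> exp (-p)" using exp_ge_add_one_self[of "-p"] by simp
  hence "(1-p)^j \<le> exp (-p)^j" using assms by (intro power_mono) auto
  also have "\<dots> = exp (- p * j)" by (simp add: exp_of_nat_mult[symmetric] mult.commute)
  finally show ?thesis .
qed

lemma term_bound:
  fixes m j :: nat and \<beta> \<epsilon> p L \<delta> x :: real
  assumes eps: "\<epsilon> > 0" and beta: "\<beta> \<ge> 2 + \<epsilon>" and m: "m \<ge> 1" and L: "L = ln (2*m)"
    and pm: "p * m = \<beta> * L / 2" and p: "0 \<le> p" "p \<le> 1" and d: "\<delta> = \<epsilon> / (2*\<beta>)"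
    and j: "1 \<le> j" "2*j \<le> m"
    and x: "x = exp (-(\<epsilon>/4) * L) + exp (ln 2 / \<delta>) * exp (- L/2)"
  shows "real (m choose j) * (1-p)^(j*(m-j)) \<le> x^j"
proof -
  have Lpos: "L \<ge> 0" using L m by simp
  have bpos: "\<beta> > 0" using eps beta by linarith
  have dpos: "\<delta> > 0" using d eps bpos by simp
  have e1: "(1-p)^(j*(m-j)) \<le> exp (- p * (j*(m-j)))" using pow_exp_bound[OF p, of "j*(m-j)"] by (simp only: of_nat_mult)
  have msr: "real (m - j) = real m - real j" using j by simp
  have x1: "exp (-(\<epsilon>/4) * L) \<le> x" using x by (simp add: add_increasing2)
  have x2: "exp (ln 2 / \<delta>) * exp (- L/2) \<le> x" using x by (simp add: add_increasing)
  show ?thesis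
  proof (cases "real j \<le> \<delta> * m")
    case True
    have A1: "p * (real m - real j) \<ge> p * ((1 - \<delta>) * m)"
      using True p by (intro mult_left_mono) (auto simp: algebra_simps)
    have A2: "p * ((1 - \<delta>) * m) = (\<beta> - \<epsilon>/2) * L / 2"
    proof -
      have "p * ((1 - \<delta>) * m) = (1-\<delta>) * (\<beta> * L / 2)" using pm by (simp add: algebra_simps)
      also have "\<dots> = (\<beta> - \<epsilon>/2) * L / 2" using d bpos by (simp add: field_simps)
      finally show ?thesis .
    qed
    have A3: "(1 + \<epsilon>/4) * L \<le> (\<beta> - \<epsilon>/2) * L / 2"
    proof -
      have "(1 + \<epsilon>/4) * L \<le> ((\<beta> - \<epsilon>/2)/2) * L" using beta Lpos by (intro mult_right_mono) auto
      thus ?thesis by simp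
    qed
    have A: "p * (real m - real j) \<ge> (1 + \<epsilon>/4) * L" using A1 A2 A3 by linarith
    have "exp (- p * (j*(m-j))) \<le> exp (- ((1 + \<epsilon>/4) * L) * j)"
      using A j msr by (simp add: mult_right_mono mult.commute mult.left_commute)
    hence "(1-p)^(j*(m-j)) \<le> exp (- ((1 + \<epsilon>/4) * L) * j)" using e1 by linarith
    moreover have "real (m choose j) \<le> exp L ^ j"
    proof -
      have "real (m choose j) \<le> real (m ^ j)" using binomial_le_pow[of j m] j by linarith
      also have "\<dots> \<le> exp L ^ j" using L m by (simp add: power_mono)
      finally show ?thesis .
    qed
    ultimately have "real (m choose j) * (1-p)^(j*(m-j)) \<le> exp L ^ j * exp (- ((1 + \<epsilon>/4) * L) * j)"
      using p by (intro mult_mono) auto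
    also have "\<dots> = exp (-(\<epsilon>/4) * L) ^ j"
      by (simp add: exp_of_nat_mult[symmetric] exp_add[symmetric] algebra_simps)
    also have "\<dots> \<le> x ^ j" using x1 by (intro power_mono) auto
    finally show ?thesis .
  next
    case False
    have ms: "real m - real j \<ge> real m / 2" using j by simp
    have A1: "p * (real m - real j) \<ge> p * (real m / 2)" using ms p by (intro mult_left_mono) auto
    have A2: "p * (real m / 2) = \<beta> * L / 4" using pm by (simp add: algebra_simps)
    have A3: "\<beta> * L \<ge> 2 * L" using beta eps Lpos by (intro mult_right_mono) auto
    have A: "p * (real m - real j) \<ge> L / 2" using A1 A2 A3 by linarith
    have "exp (- p * (j*(m-j))) \<le> exp (- (L/2) * j)"
      using A j msr by (simp add: mult_right_mono mult.commute mult.left_commute)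
    hence "(1-p)^(j*(m-j)) \<le> exp (- (L/2) * j)" using e1 by linarith
    moreover have "real (m choose j) \<le> exp (ln 2 / \<delta>) ^ j"
    proof -
      have "real (m choose j) \<le> 2 ^ m" proof -
        have "m choose j \<le> 2 ^ m" by (rule binomial_le_pow2)
        hence "real (m choose j) \<le> real (2 ^ m)" by (simp only: of_nat_le_iff)
        thus ?thesis by simp
      qed
      also have "(2::real) ^ m = exp (m * ln 2)" by (simp add: exp_of_nat_mult)
      also have "\<dots> \<le> exp (j / \<delta> * ln 2)"
      proof -
        have "real m < j / \<delta>" using False dpos by (simp add: field_simps mult.commute)
        thus ?thesis by (intro exp_mono mult_right_mono) auto
      qed
      also have "\<dots> = exp (ln 2 / \<delta>) ^ j" by (simp add: exp_of_nat_mult[symmetric] algebra_simps)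
      finally show ?thesis .
    qed
    ultimately have "real (m choose j) * (1-p)^(j*(m-j)) \<le> exp (ln 2 / \<delta>) ^ j * exp (- (L/2) * j)"
      using p by (intro mult_mono) auto
    also have "\<dots> = (exp (ln 2 / \<delta>) * exp (- L/2)) ^ j"
      by (simp add: exp_of_nat_mult[symmetric] power_mult_distrib algebra_simps)
    also have "\<dots> \<le> x ^ j" using x2 by (intro power_mono) auto
    finally show ?thesis .
  qed
qed



lemma adj_sym: "adj f a b = adj f b a"
  by (auto simp: adj_def min_def max_def)

lemma hub_fail:
  fixes p :: real
  assumes A: "A \<subseteq> {1..n}" and B: "B \<subseteq> {1..n}" and AB: "A \<inter> B = {}" and p: "0 \<le> p" "p \<le> 1"
  shows "measure_pmf.prob (Gnp n p) {f. \<not>(\<forall>u\<in>A. \<exists>s\<in>B. adj f u s)} \<le> card A * (1-p)^card B"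
proof -
  have fA: "finite A" using A finite_subset by blast
  have "{f. \<not>(\<forall>u\<in>A. \<exists>s\<in>B. adj f u s)} = (\<Union>u\<in>A. {f. \<forall>a\<in>{u}. \<forall>b\<in>B. \<not> adj f a b})" by auto
  hence "measure_pmf.prob (Gnp n p) {f. \<not>(\<forall>u\<in>A. \<exists>s\<in>B. adj f u s)}
      \<le> (\<Sum>u\<in>A. measure_pmf.prob (Gnp n p) {f. \<forall>a\<in>{u}. \<forall>b\<in>B. \<not> adj f a b})"
    using measure_pmf.finite_measure_subadditive_finite[OF fA] by simp
  also have "\<dots> = (\<Sum>u\<in>A. (1-p)^card B)"
  proof (rule sum.cong[OF refl])
    fix u assume uA: "u \<in> A"
    hence "{u} \<subseteq> {1..n}" "{u} \<inter> B = {}" using A AB by auto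
    thus "measure_pmf.prob (Gnp n p) {f. \<forall>a\<in>{u}. \<forall>b\<in>B. \<not> adj f a b} = (1-p)^card B"
      using prob_cut[of "{u}" n B p] B p by simp
  qed
  finally show ?thesis by simp
qed

lemma conn_fail:
  fixes p :: real
  assumes S: "S \<subseteq> {1..n}" and cS: "card S = m" and m: "m \<ge> 1" and p: "0 \<le> p" "p \<le> 1"
  shows "measure_pmf.prob (Gnp n p) {f. \<not> connected_in (adj f) S}
     \<le> (\<Sum>s\<in>{1..m div 2}. real (m choose s) * (1-p)^(s*(m-s)))"
proof -
  have fS: "finite S" using S finite_subset by blast
  have Sne: "S \<noteq> {}" using cS m by auto
  define F where "F = (\<lambda>s. {T. T \<subseteq> S \<and> card T = s})"
  define Cuts where "Cuts = (\<Union>s\<in>{1..m div 2}. F s)"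
  have finF: "finite (F s)" for s unfolding F_def using fS by auto
  have fC: "finite Cuts" unfolding Cuts_def using finF by auto
  have sub: "{f. \<not> connected_in (adj f) S} \<subseteq> (\<Union>T\<in>Cuts. {f. \<forall>a\<in>T. \<forall>b\<in>S-T. \<not> adj f a b})"
  proof
    fix f assume "f \<in> {f. \<not> connected_in (adj f) S}"
    then obtain T where T: "T \<subseteq> S" "T \<noteq> {}" "2 * card T \<le> card S" "\<forall>a\<in>T. \<forall>b\<in>S-T. \<not> adj f a b"
      using not_connected_cut[where E="adj f", OF Sne fS _ adj_sym] \<open>f \<in> _\<close> by auto
    have "finite T" using T fS finite_subset by blast
    hence "card T \<ge> 1" using T by (simp add: Suc_le_eq card_gt_0_iff)
    moreover have "card T \<le> m div 2" using T cS by linarith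
    ultimately have "T \<in> Cuts" using T unfolding Cuts_def F_def by auto
    thus "f \<in> (\<Union>T\<in>Cuts. {f. \<forall>a\<in>T. \<forall>b\<in>S-T. \<not> adj f a b})" using T by auto
  qed
  have "measure_pmf.prob (Gnp n p) {f. \<not> connected_in (adj f) S}
      \<le> measure_pmf.prob (Gnp n p) (\<Union>T\<in>Cuts. {f. \<forall>a\<in>T. \<forall>b\<in>S-T. \<not> adj f a b})"
    using sub by (intro measure_pmf.finite_measure_mono) auto
  also have "\<dots> \<le> (\<Sum>T\<in>Cuts. measure_pmf.prob (Gnp n p) {f. \<forall>a\<in>T. \<forall>b\<in>S-T. \<not> adj f a b})"
    using measure_pmf.finite_measure_subadditive_finite[OF fC] by simp
  also have "\<dots> = (\<Sum>T\<in>Cuts. (1-p)^(card T * (m - card T)))"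
  proof (rule sum.cong[OF refl])
    fix T assume "T \<in> Cuts"
    hence TS: "T \<subseteq> S" unfolding Cuts_def F_def by auto
    have "finite T" using TS fS finite_subset by blast
    hence "card (S - T) = m - card T" using TS cS by (simp add: card_Diff_subset)
    moreover have "T \<subseteq> {1..n}" "S - T \<subseteq> {1..n}" using TS S by auto
    ultimately show "measure_pmf.prob (Gnp n p) {f. \<forall>a\<in>T. \<forall>b\<in>S-T. \<not> adj f a b} = (1-p)^(card T * (m - card T))"
      using prob_cut[of T n "S - T" p] p by auto
  qed
  also have "\<dots> = (\<Sum>s\<in>{1..m div 2}. (\<Sum>T\<in>F s. (1-p)^(card T * (m - card T))))"
    unfolding Cuts_def by (rule sum.UNION_disjoint) (simp, simp add: finF, unfold F_def, blast)
  also have "\<dots> = (\<Sum>s\<in>{1..m div 2}. real (m choose s) * (1-p)^(s*(m-s)))"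
  proof (rule sum.cong[OF refl])
    fix s
    have "(\<Sum>T\<in>F s. (1-p)^(card T * (m - card T))) = (\<Sum>T\<in>F s. (1-p)^(s * (m - s)))"
      by (rule sum.cong) (auto simp: F_def)
    also have "\<dots> = real (card (F s)) * (1-p)^(s * (m - s))" by simp
    also have "card (F s) = m choose s" unfolding F_def using n_subsets[OF fS] cS by simp
    finally show "(\<Sum>T\<in>F s. (1-p)^(card T * (m - card T))) = real (m choose s) * (1-p)^(s*(m-s))" .
  qed
  finally show ?thesis .
qed



lemma VU_lemma:
  assumes N1: "N1 \<subseteq> {1..2*m}" and N2: "N2 \<subseteq> {1..2*m}" and disj: "N1 \<inter> N2 = {}"
    and c1: "card N1 = m" and c2: "card N2 = m"
  shows "{1..2*m} = N1 \<union> N2"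
proof -
  have fN1: "finite N1" and fN2: "finite N2" using N1 N2 finite_subset by blast+
  have "card (N1 \<union> N2) = card {1..2*m}" using card_Un_disjoint[OF fN1 fN2 disj] c1 c2 by simp
  thus ?thesis using N1 N2 by (metis card_subset_eq finite_atLeastAtMost le_sup_iff)
qed

lemma per_m:
  fixes p :: real
  assumes N1: "N1 \<subseteq> {1..2*m}" and N2: "N2 \<subseteq> {1..2*m}" and disj: "N1 \<inter> N2 = {}"
    and c1: "card N1 = m" and c2: "card N2 = m" and m: "m \<ge> 1" and p: "0 \<le> p" "p \<le> 1"
  shows "measure_pmf.prob (Gnp (2*m) p)
            {f. r_partition {1..2*m} (adj f) 2 (\<lambda>i. if i = 1 then N1 else N2)
                \<and> (\<forall>k\<ge>1. MG {1..2*m} (adj f) k \<le> 2 * MC k m + 2)}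
         \<ge> 1 - (2 * (real m * (1-p)^m) + 2 * (\<Sum>s\<in>{1..m div 2}. real (m choose s) * (1-p)^(s*(m-s))))"
proof -
  let ?M = "Gnp (2*m) p"
  let ?Ev = "{f. r_partition {1..2*m} (adj f) 2 (\<lambda>i. if i = 1 then N1 else N2)
                \<and> (\<forall>k\<ge>1. MG {1..2*m} (adj f) k \<le> 2 * MC k m + 2)}"
  define G where "G = {f. connected_in (adj f) N1 \<and> connected_in (adj f) N2
      \<and> (\<forall>u\<in>N1. \<exists>s\<in>N2. adj f u s) \<and> (\<forall>u\<in>N2. \<exists>s\<in>N1. adj f u s)}"
  define B1 where "B1 = {f. \<not> connected_in (adj f) N1}"
  define B2 where "B2 = {f. \<not> connected_in (adj f) N2}"
  define B3 where "B3 = {f. \<not> (\<forall>u\<in>N1. \<exists>s\<in>N2. adj f u s)}"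
  define B4 where "B4 = {f. \<not> (\<forall>u\<in>N2. \<exists>s\<in>N1. adj f u s)}"
  define S where "S = (\<Sum>s\<in>{1..m div 2}. real (m choose s) * (1-p)^(s*(m-s)))"
  have VU: "{1..2*m} = N1 \<union> N2" using VU_lemma[OF N1 N2 disj c1 c2] .
  have D1: "{1..2*m} - N1 = N2" and D2: "{1..2*m} - N2 = N1" using VU disj by auto
  have GE: "G \<subseteq> ?Ev"
  proof
    fix f assume "f \<in> G"
    hence g: "connected_in (adj f) N1" "connected_in (adj f) N2"
      "\<forall>u\<in>N1. \<exists>s\<in>N2. adj f u s" "\<forall>u\<in>N2. \<exists>s\<in>N1. adj f u s" by (auto simp: G_def)
    have two: "{1..2::nat} = {1,2}" by auto
    have "r_partition {1..2*m} (adj f) 2 (\<lambda>i. if i = 1 then N1 else N2)"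
      unfolding r_partition_def two using disj VU D1 D2 g by (auto simp: is_hub_def)
    moreover have "\<forall>k\<ge>1. MG {1..2*m} (adj f) k \<le> 2 * MC k m + 2"
      using MG_bound[OF N1 N2 disj c1 c2 g adj_sym] by blast
    ultimately show "f \<in> ?Ev" by simp
  qed
  have "UNIV - G \<subseteq> (B1 \<union> B2) \<union> (B3 \<union> B4)" by (auto simp: G_def B1_def B2_def B3_def B4_def)
  hence "measure_pmf.prob ?M (UNIV - G) \<le> measure_pmf.prob ?M ((B1 \<union> B2) \<union> (B3 \<union> B4))"
    by (intro measure_pmf.finite_measure_mono) auto
  also have "\<dots> \<le> measure_pmf.prob ?M (B1 \<union> B2) + measure_pmf.prob ?M (B3 \<union> B4)"
    by (rule measure_subadditive) auto
  also have "\<dots> \<le> (measure_pmf.prob ?M B1 + measure_pmf.prob ?M B2) + (measure_pmf.prob ?M B3 + measure_pmf.prob ?M B4)"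
    by (intro add_mono measure_subadditive) auto
  also have "\<dots> \<le> (S + S) + (real m * (1-p)^m + real m * (1-p)^m)"
  proof (intro add_mono)
    show "measure_pmf.prob ?M B1 \<le> S" unfolding B1_def S_def using conn_fail[OF N1 c1 m p] .
    show "measure_pmf.prob ?M B2 \<le> S" unfolding B2_def S_def using conn_fail[OF N2 c2 m p] .
    show "measure_pmf.prob ?M B3 \<le> real m * (1-p)^m" unfolding B3_def using hub_fail[OF N1 N2 disj p] c1 c2 by simp
    have disj': "N2 \<inter> N1 = {}" using disj by blast
    show "measure_pmf.prob ?M B4 \<le> real m * (1-p)^m" unfolding B4_def using hub_fail[OF N2 N1 disj' p] c1 c2 by simp
  qed
  finally have bad: "measure_pmf.prob ?M (UNIV - G) \<le> 2 * (real m * (1-p)^m) + 2 * S" by simp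
  have "measure_pmf.prob ?M G = 1 - measure_pmf.prob ?M (UNIV - G)"
    using measure_pmf.prob_compl[of G ?M] by simp
  moreover have "measure_pmf.prob ?M G \<le> measure_pmf.prob ?M ?Ev"
    using GE by (intro measure_pmf.finite_measure_mono) auto
  ultimately show ?thesis using bad unfolding S_def by linarith
qed



lemma geo_tel: "(\<Sum>s\<in>{1..K}. (x::real)^s) * (1 - x) = x - x^(Suc K)"
proof (induction K)
  case 0 then show ?case by simp
next
  case (Suc K)
  let ?S = "(\<Sum>s\<in>{1..K}. x^s)"
  have "(\<Sum>s\<in>{1..Suc K}. x^s) = ?S + x^Suc K" by simp
  hence "(\<Sum>s\<in>{1..Suc K}. x^s) * (1 - x) = ?S * (1-x) + x^Suc K - x^Suc (Suc K)"
    by (simp add: algebra_simps)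
  thus ?case using Suc.IH by simp
qed

lemma geo_bound:
  fixes x :: real assumes "0 \<le> x" "x < 1"
  shows "(\<Sum>s\<in>{1..K}. x^s) \<le> x / (1 - x)"
proof -
  have "(\<Sum>s\<in>{1..K}. x^s) = (x - x^(Suc K)) / (1 - x)" using geo_tel[where K=K and x=x] assms
    by (simp add: field_simps)
  also have "\<dots> \<le> x / (1 - x)" using assms by (intro divide_right_mono) auto
  finally show ?thesis .
qed

lemma term1_bound:
  fixes m :: nat and \<beta> \<epsilon> p L :: real
  assumes eps: "\<epsilon> > 0" and beta: "\<beta> \<ge> 2 + \<epsilon>" and m: "m \<ge> 1" and L: "L = ln (2*real m)"
    and pm: "p * m = \<beta> * L / 2" and p: "0 \<le> p" "p \<le> 1"
  shows "real m * (1-p)^m \<le> exp (-(\<epsilon>/2) * L)"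
proof -
  have Lpos: "L \<ge> 0" using L m by simp
  have "(1-p)^m \<le> exp (- p * m)" using pow_exp_bound[OF p] by simp
  also have "- p * m = - (\<beta> * L / 2)" using pm by simp
  also have "exp (- (\<beta> * L / 2)) \<le> exp (- ((1 + \<epsilon>/2) * L))"
  proof -
    have "(1 + \<epsilon>/2) * L \<le> (\<beta>/2) * L" using beta Lpos by (intro mult_right_mono) auto
    thus ?thesis by simp
  qed
  finally have A: "(1-p)^m \<le> exp (- ((1 + \<epsilon>/2) * L))" .
  have B: "real m \<le> exp L" using L m by simp
  have "real m * (1-p)^m \<le> exp L * exp (- ((1 + \<epsilon>/2) * L))"
    using A B p by (intro mult_mono) auto
  also have "\<dots> = exp (-(\<epsilon>/2) * L)" by (simp add: exp_add[symmetric] algebra_simps)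
  finally show ?thesis .
qed



theorem theorem8:
  fixes \<epsilon> \<beta> :: real
    and N1 N2 :: "nat \<Rightarrow> nat set"
  assumes "\<epsilon> > 0" and "\<beta> \<ge> 2 + \<epsilon>"
    and "\<And>m. N1 m \<subseteq> {1..2*m} \<and> N2 m \<subseteq> {1..2*m} \<and> N1 m \<inter> N2 m = {}
               \<and> card (N1 m) = m \<and> card (N2 m) = m"
  shows "(\<lambda>m. measure_pmf.prob (Gnp (2*m) (\<beta> * ln (real (2*m)) / real (2*m)))
            {f. r_partition {1..2*m} (adj f) 2 (\<lambda>i. if i = 1 then N1 m else N2 m)
                \<and> (\<forall>k\<ge>1. MG {1..2*m} (adj f) k \<le> 2 * MC k m + 2)})
         \<longlonglongrightarrow> 1"
proof -
  note eps = assms(1) and beta = assms(2) and NN = assms(3)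
  have bpos: "\<beta> > 0" using eps beta by linarith
  define \<delta> where "\<delta> = \<epsilon> / (2*\<beta>)"
  define K where "K = exp (ln 2 / \<delta>)"
  define L where "L = (\<lambda>m::nat. ln (2 * real m))"
  define pp where "pp = (\<lambda>m::nat. \<beta> * ln (real (2*m)) / real (2*m))"
  define x where "x = (\<lambda>m. exp (-(\<epsilon>/4) * L m) + K * exp (- L m/2))"
  define c where "c = (\<lambda>m. 2 * exp (-(\<epsilon>/2) * L m) + 2 * (x m / (1 - x m)))"
  define P where "P = (\<lambda>m. measure_pmf.prob (Gnp (2*m) (\<beta> * ln (real (2*m)) / real (2*m)))
            {f. r_partition {1..2*m} (adj f) 2 (\<lambda>i. if i = 1 then N1 m else N2 m)
                \<and> (\<forall>k\<ge>1. MG {1..2*m} (adj f) k \<le> 2 * MC k m + 2)})"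
  have limx1: "(\<lambda>m::nat. exp (-(\<epsilon>/4) * L m)) \<longlonglongrightarrow> 0" unfolding L_def using eps by real_asymp
  have limx2: "(\<lambda>m::nat. exp (- L m/2)) \<longlonglongrightarrow> 0" unfolding L_def by real_asymp
  have limx: "x \<longlonglongrightarrow> 0"
  proof -
    have "(\<lambda>m. exp (-(\<epsilon>/4) * L m) + K * exp (- L m/2)) \<longlonglongrightarrow> 0 + K * 0"
      by (intro tendsto_intros limx1 limx2)
    thus ?thesis unfolding x_def by simp
  qed
  have lime: "(\<lambda>m::nat. exp (-(\<epsilon>/2) * L m)) \<longlonglongrightarrow> 0" unfolding L_def using eps by real_asymp
  have limc: "c \<longlonglongrightarrow> 0"
  proof -
    have "(\<lambda>m. 2 * exp (-(\<epsilon>/2) * L m) + 2 * (x m / (1 - x m))) \<longlonglongrightarrow> 2 * 0 + 2 * (0 / (1 - 0))"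
      by (intro tendsto_intros lime limx) auto
    thus ?thesis unfolding c_def by simp
  qed
  have limp: "pp \<longlonglongrightarrow> 0" unfolding pp_def by real_asymp
  have ev: "eventually (\<lambda>m. m \<ge> 1 \<and> pp m \<le> 1 \<and> x m < 1) sequentially"
  proof -
    have "eventually (\<lambda>m. pp m < 1) sequentially" using limp by (rule order_tendstoD) simp
    moreover have "eventually (\<lambda>m. x m < 1) sequentially" using limx by (rule order_tendstoD) simp
    moreover have "eventually (\<lambda>m::nat. m \<ge> 1) sequentially" by (rule eventually_ge_at_top)
    ultimately show ?thesis by eventually_elim auto
  qed
  have lower: "eventually (\<lambda>m. 1 - c m \<le> P m) sequentially"
    using ev
  proof eventually_elim
    case (elim m)
    hence m: "m \<ge> 1" and p1: "pp m \<le> 1" and x1: "x m < 1" by auto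
    have p0: "0 \<le> pp m" using m bpos unfolding pp_def by (intro divide_nonneg_pos mult_nonneg_nonneg) auto
    have Lm: "L m = ln (2 * real m)" by (simp add: L_def)
    have pm: "pp m * real m = \<beta> * L m / 2" using m unfolding pp_def L_def by (simp add: field_simps)
    have x0: "0 \<le> x m" unfolding x_def K_def by simp
    have t1: "real m * (1 - pp m)^m \<le> exp (-(\<epsilon>/2) * L m)"
      by (rule term1_bound[OF eps beta m Lm pm p0 p1])
    have "(\<Sum>s\<in>{1..m div 2}. real (m choose s) * (1 - pp m)^(s*(m-s))) \<le> (\<Sum>s\<in>{1..m div 2}. x m ^ s)"
    proof (rule sum_mono)
      fix j assume "j \<in> {1..m div 2}"
      hence j: "1 \<le> j" "2 * j \<le> m" by auto
      show "real (m choose j) * (1 - pp m)^(j*(m-j)) \<le> x m ^ j"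
        by (rule term_bound[OF eps beta m _ pm p0 p1 \<delta>_def j]) (simp_all add: L_def x_def K_def)
    qed
    also have "\<dots> \<le> x m / (1 - x m)" by (rule geo_bound[OF x0 x1])
    finally have t2: "(\<Sum>s\<in>{1..m div 2}. real (m choose s) * (1 - pp m)^(s*(m-s))) \<le> x m / (1 - x m)" .
    have "P m \<ge> 1 - (2 * (real m * (1-pp m)^m) + 2 * (\<Sum>s\<in>{1..m div 2}. real (m choose s) * (1-pp m)^(s*(m-s))))"
    proof -
      have eqP: "P m = measure_pmf.prob (Gnp (2*m) (pp m))
            {f. r_partition {1..2*m} (adj f) 2 (\<lambda>i. if i = 1 then N1 m else N2 m)
                \<and> (\<forall>k\<ge>1. MG {1..2*m} (adj f) k \<le> 2 * MC k m + 2)}" by (simp add: P_def pp_def)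
      show ?thesis unfolding eqP using NN[of m] by (intro per_m m p0 p1) auto
    qed
    thus ?case using t1 t2 unfolding c_def by linarith
  qed
  have upper: "eventually (\<lambda>m. P m \<le> 1) sequentially" by (simp add: P_def)
  have "(\<lambda>m. 1 - c m) \<longlonglongrightarrow> 1 - 0" by (intro tendsto_intros limc)
  hence "P \<longlonglongrightarrow> 1" using tendsto_sandwich[OF lower upper] by simp
  thus ?thesis unfolding P_def .
qed

end
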